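(* Let $G$ be a graph and $x_0$ a vertex of degree two in $G$ with two distinct neighbors $x_1,x_2$, and let $J'=G/x_0$. If $J'$ has an osculating bicycle $(Q,Q')$ such that neither $Q$ nor $Q'$ is a cycle of $G$, then (the edges of) $Q\cup Q'$ form an $x_0$-isolating even cycle of $G$.
   Context: Graphs are loopless; multiple edges allowed (a pair of parallel edges forms a cycle of length two). $G/x_0$ (bicontraction of $x_0$) is the graph obtained from $G$ by contracting the two edges $x_0x_1$ and $x_0x_2$ into a single vertex; every other edge of $G$ is identified with the corresponding edge of $G/x_0$ (parallel edges may arise). An osculating bicycle is a pair of cycles $(Q,Q')$ that have exactly one vertex in common and whose lengths have the same parity. For a vertex $v$ of $G$, a cycle $C$ of $G-v$ is $v$-isolating if $v$ is an isolated vertex of $G-V(C)$. *)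

theory Defs
  imports Main
begin

text \<open>A (finite, loopless) multigraph is a triple (V, E, ends): a vertex set, an edge set,
  and an incidence map assigning to each edge its set of two distinct end vertices.
  Parallel edges are allowed since distinct edges may have the same ends.\<close>

type_synonym ('v,'e) mgraph = "'v set \<times> 'e set \<times> ('e \<Rightarrow> 'v set)"

definition gV :: "('v,'e) mgraph \<Rightarrow> 'v set" where "gV G = fst G"
definition gE :: "('v,'e) mgraph \<Rightarrow> 'e set" where "gE G = fst (snd G)"
definition gends :: "('v,'e) mgraph \<Rightarrow> 'e \<Rightarrow> 'v set" where "gends G = snd (snd G)"

definition wf_mgraph :: "('v,'e) mgraph \<Rightarrow> bool" where
  "wf_mgraph G \<longleftrightarrow> finite (gV G) \<and> finite (gE G) \<and>
     (\<forall>e\<in>gE G. gends G e \<subseteq> gV G \<and> card (gends G e) = 2)"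

definition incident :: "('v,'e) mgraph \<Rightarrow> 'v \<Rightarrow> 'e set" where
  "incident G v = {e \<in> gE G. v \<in> gends G e}"

definition degree :: "('v,'e) mgraph \<Rightarrow> 'v \<Rightarrow> nat" where
  "degree G v = card (incident G v)"

definition neighbors :: "('v,'e) mgraph \<Rightarrow> 'v \<Rightarrow> 'v set" where
  "neighbors G v = (\<Union>e\<in>incident G v. gends G e) - {v}"

definition everts :: "('v,'e) mgraph \<Rightarrow> 'e set \<Rightarrow> 'v set" where
  "everts G C = (\<Union>e\<in>C. gends G e)"

text \<open>A cycle is represented by its (nonempty, finite) edge set: a connected edge set in
  which every spanned vertex has degree exactly two. Its length is the number of edges;
  two parallel edges form a cycle of length two.\<close>
definition is_cycle :: "('v,'e) mgraph \<Rightarrow> 'e set \<Rightarrow> bool" where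
  "is_cycle G C \<longleftrightarrow> C \<subseteq> gE G \<and> C \<noteq> {} \<and> finite C \<and>
     (\<forall>e\<in>C. card (gends G e) = 2) \<and>
     (\<forall>v\<in>everts G C. card {e\<in>C. v \<in> gends G e} = 2) \<and>
     (\<forall>D. D \<noteq> {} \<and> D \<subset> C \<longrightarrow>
        (\<exists>e\<in>D. \<exists>e'\<in>C - D. gends G e \<inter> gends G e' \<noteq> {}))"

definition osculating_bicycle :: "('v,'e) mgraph \<Rightarrow> 'e set \<Rightarrow> 'e set \<Rightarrow> bool" where
  "osculating_bicycle G Q Q' \<longleftrightarrow> is_cycle G Q \<and> is_cycle G Q' \<and>
     card (everts G Q \<inter> everts G Q') = 1 \<and> (even (card Q) \<longleftrightarrow> even (card Q'))"

definition delete_vertex :: "('v,'e) mgraph \<Rightarrow> 'v \<Rightarrow> ('v,'e) mgraph" where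
  "delete_vertex G v = (gV G - {v}, {e \<in> gE G. v \<notin> gends G e}, gends G)"

text \<open>A cycle C of G - v is v-isolating if v is isolated in G - V(C), i.e. every edge of G
  at v has an end in V(C).\<close>
definition isolating_cycle :: "('v,'e) mgraph \<Rightarrow> 'v \<Rightarrow> 'e set \<Rightarrow> bool" where
  "isolating_cycle G v C \<longleftrightarrow> v \<in> gV G \<and> is_cycle (delete_vertex G v) C \<and>
     (\<forall>e\<in>incident G v. gends G e \<inter> everts G C \<noteq> {})"

text \<open>Bicontraction G/x0 where x1, x2 are the two neighbours of x0: the edges x0x1, x0x2 are
  contracted; the resulting vertex is represented by x1 (x0 and x2 are merged into x1).
  Every other edge keeps its identity; edges that would become loops (edges x1x2) are
  discarded, since graphs are loopless.\<close>
definition merge_map :: "'v \<Rightarrow> 'v \<Rightarrow> 'v \<Rightarrow> 'v" where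
  "merge_map x1 x2 v = (if v = x2 then x1 else v)"

definition bicontract :: "('v,'e) mgraph \<Rightarrow> 'v \<Rightarrow> 'v \<Rightarrow> 'v \<Rightarrow> ('v,'e) mgraph" where
  "bicontract G x0 x1 x2 =
    (gV G - {x0, x2},
     {e \<in> gE G. x0 \<notin> gends G e \<and> card (merge_map x1 x2 ` gends G e) = 2},
     (\<lambda>e. merge_map x1 x2 ` gends G e))"

end

theory Submission
  imports Defs
begin

lemma bic_simps:
  "gE (bicontract G x0 x1 x2) = {e \<in> gE G. x0 \<notin> gends G e \<and> card (merge_map x1 x2 ` gends G e) = 2}"
  "gends (bicontract G x0 x1 x2) = (\<lambda>e. merge_map x1 x2 ` gends G e)"
  by (simp_all add: bicontract_def gE_def gends_def)

lemma del_simps: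
  "gV (delete_vertex G v) = gV G - {v}"
  "gE (delete_vertex G v) = {e \<in> gE G. v \<notin> gends G e}"
  "gends (delete_vertex G v) = gends G"
  by (simp_all add: delete_vertex_def gV_def gE_def gends_def)

lemma cycle_rename:
  assumes H: "is_cycle H C" and sub: "C \<subseteq> gE G" and inj: "inj \<sigma>"
    and en: "\<forall>e\<in>C. gends H e = \<sigma> ` gends G e"
  shows "is_cycle G C"
proof -
  have ci: "card (\<sigma> ` A) = card A" for A
    by (rule card_image) (rule inj_on_subset[OF inj subset_UNIV])
  have c1: "card (gends G e) = 2" if e: "e \<in> C" for e
  proof -
    have "card (gends H e) = 2" using H e unfolding is_cycle_def by blast
    moreover have "gends H e = \<sigma> ` gends G e" using en e by blast
    ultimately show ?thesis using ci by simp
  qed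
  have c2: "card {e\<in>C. v \<in> gends G e} = 2" if v: "v \<in> everts G C" for v
  proof -
    obtain e where e: "e \<in> C" "v \<in> gends G e" using v unfolding everts_def by blast
    hence "\<sigma> v \<in> gends H e" using en by blast
    hence "\<sigma> v \<in> everts H C" using e unfolding everts_def by blast
    hence "card {e\<in>C. \<sigma> v \<in> gends H e} = 2" using H unfolding is_cycle_def by blast
    moreover have "{e\<in>C. \<sigma> v \<in> gends H e} = {e\<in>C. v \<in> gends G e}"
      using en inj_image_mem_iff[OF inj] by auto
    ultimately show ?thesis by simp
  qed
  have c3: "\<exists>e\<in>D. \<exists>e'\<in>C - D. gends G e \<inter> gends G e' \<noteq> {}" if "D \<noteq> {} \<and> D \<subset> C" for D
  proof -
    have "\<exists>e\<in>D. \<exists>e'\<in>C - D. gends H e \<inter> gends H e' \<noteq> {}"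
      using H that unfolding is_cycle_def by blast
    then obtain e e' where ee: "e \<in> D" "e' \<in> C - D" "gends H e \<inter> gends H e' \<noteq> {}"
      by blast
    have "e \<in> C" "e' \<in> C" using ee that by auto
    hence "gends H e = \<sigma> ` gends G e" "gends H e' = \<sigma> ` gends G e'" using en by auto
    hence "\<sigma> ` (gends G e \<inter> gends G e') \<noteq> {}" using ee(3) image_Int[OF inj] by simp
    thus ?thesis using ee by blast
  qed
  have Hc: "C \<noteq> {}" "finite C" using H unfolding is_cycle_def by blast+
  show ?thesis unfolding is_cycle_def
  proof (intro conjI)
    show "C \<subseteq> gE G" by (rule sub)
    show "C \<noteq> {}" "finite C" by (rule Hc(1), rule Hc(2))
    show "\<forall>e\<in>C. card (gends G e) = 2" using c1 by blast
    show "\<forall>v\<in>everts G C. card {e\<in>C. v \<in> gends G e} = 2" using c2 by blast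
    show "\<forall>D. D \<noteq> {} \<and> D \<subset> C \<longrightarrow> (\<exists>e\<in>D. \<exists>e'\<in>C - D. gends G e \<inter> gends G e' \<noteq> {})"
      using c3 by blast
  qed
qed

lemma cycle_conn:
  assumes "is_cycle G C" "D \<noteq> {}" "D \<subset> C"
  shows "\<exists>e\<in>D. \<exists>e'\<in>C - D. gends G e \<inter> gends G e' \<noteq> {}"
proof -
  have "\<forall>D. D \<noteq> {} \<and> D \<subset> C \<longrightarrow> (\<exists>e\<in>D. \<exists>e'\<in>C - D. gends G e \<inter> gends G e' \<noteq> {})"
    using assms(1) unfolding is_cycle_def by (elim conjE) assumption
  thus ?thesis using assms(2,3) by blast
qed

lemma handshake:
  assumes "finite D" "\<forall>e\<in>D. finite (gends G e)"
  shows "(\<Sum>v\<in>everts G D. card {e\<in>D. v \<in> gends G e}) = (\<Sum>e\<in>D. card (gends G e))"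
proof -
  have fe: "finite (everts G D)" using assms unfolding everts_def by auto
  have "(\<Sum>v\<in>everts G D. card {e\<in>D. v \<in> gends G e})
      = (\<Sum>v\<in>everts G D. \<Sum>e\<in>D. if v \<in> gends G e then 1 else 0)"
    using assms(1) by (simp add: sum.If_cases Int_def)
  also have "\<dots> = (\<Sum>e\<in>D. \<Sum>v\<in>everts G D. if v \<in> gends G e then 1 else 0)"
    by (rule sum.swap)
  also have "\<dots> = (\<Sum>e\<in>D. card (gends G e))"
  proof (rule sum.cong)
    fix e assume e: "e \<in> D"
    have "gends G e \<subseteq> everts G D" using e unfolding everts_def by auto
    hence "everts G D \<inter> gends G e = gends G e" by auto
    thus "(\<Sum>v\<in>everts G D. if v \<in> gends G e then 1 else 0) = card (gends G e)"
      using fe by (simp add: sum.If_cases)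
  qed simp
  finally show ?thesis .
qed


lemma F_other: "v \<noteq> x1 \<Longrightarrow> v \<noteq> x2 \<Longrightarrow> (v \<in> merge_map x1 x2 ` S) = (v \<in> S)"
  by (force simp: merge_map_def image_iff)

lemma F_x1: "(x1 \<in> merge_map x1 x2 ` S) = (x1 \<in> S \<or> x2 \<in> S)"
  by (force simp: merge_map_def image_iff)

lemma F_x2: "x1 \<noteq> x2 \<Longrightarrow> x2 \<notin> merge_map x1 x2 ` S"
  by (auto simp: merge_map_def)

locale qpath =
  fixes G :: "('v,'e) mgraph" and x0 x1 x2 :: 'v and Q :: "'e set"
  assumes wf: "wf_mgraph G" and neq: "x1 \<noteq> x2"
    and cyc: "is_cycle (bicontract G x0 x1 x2) Q" and ncyc: "\<not> is_cycle G Q"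
begin

abbreviation "F \<equiv> merge_map x1 x2"
abbreviation "J \<equiv> bicontract G x0 x1 x2"

lemma finQ: "finite Q" using cyc unfolding is_cycle_def by blast

lemma edgeQ:
  assumes "e \<in> Q"
  shows "e \<in> gE G" "x0 \<notin> gends G e" "card (F ` gends G e) = 2" "card (gends G e) = 2"
    "gends J e = F ` gends G e" "finite (gends G e)"
proof -
  show 1: "e \<in> gE G" "x0 \<notin> gends G e" "card (F ` gends G e) = 2"
    using cyc assms unfolding is_cycle_def by (auto simp: bic_simps)
  show 2: "card (gends G e) = 2" using wf 1 unfolding wf_mgraph_def by blast
  show "gends J e = F ` gends G e" by (simp add: bic_simps)
  show "finite (gends G e)" using 2 by (metis card.infinite zero_neq_numeral)
qed

lemma not_both:
  assumes "e \<in> Q" "x1 \<in> gends G e" "x2 \<in> gends G e"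
  shows False
proof -
  have "{x1, x2} \<subseteq> gends G e" using assms by auto
  moreover have "card {x1, x2} = 2" using neq by simp
  ultimately have "gends G e = {x1, x2}"
    using edgeQ[OF assms(1)] by (metis card_subset_eq)
  hence "F ` gends G e = {x1}" by (auto simp: merge_map_def)
  thus False using edgeQ(3)[OF assms(1)] by simp
qed

definition "P1 = {e\<in>Q. x1 \<in> gends G e}"
definition "P2 = {e\<in>Q. x2 \<in> gends G e}"

lemma P1_ne: "P1 \<noteq> {}"
proof
  assume P1: "P1 = {}"
  define \<sigma> where "\<sigma> = (\<lambda>v. if v = x1 then x2 else if v = x2 then x1 else v)"
  have inj: "inj \<sigma>" unfolding \<sigma>_def inj_def by auto
  have "\<forall>e\<in>Q. gends J e = \<sigma> ` gends G e"
  proof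
    fix e assume e: "e \<in> Q"
    hence "x1 \<notin> gends G e" using P1 unfolding P1_def by auto
    hence "F ` gends G e = \<sigma> ` gends G e"
      unfolding \<sigma>_def merge_map_def by (intro image_cong) auto
    thus "gends J e = \<sigma> ` gends G e" using edgeQ[OF e] by simp
  qed
  moreover have "Q \<subseteq> gE G" using edgeQ(1) by blast
  ultimately have "is_cycle G Q" using cycle_rename[OF cyc _ inj] by blast
  thus False using ncyc by simp
qed

lemma P2_ne: "P2 \<noteq> {}"
proof
  assume P2: "P2 = {}"
  have inj: "inj (id :: 'v \<Rightarrow> 'v)" by simp
  have "\<forall>e\<in>Q. gends J e = id ` gends G e"
  proof
    fix e assume e: "e \<in> Q"
    hence "x2 \<notin> gends G e" using P2 unfolding P2_def by auto
    hence "F ` gends G e = id ` gends G e"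
      unfolding merge_map_def by (intro image_cong) auto
    thus "gends J e = id ` gends G e" using edgeQ[OF e] by simp
  qed
  moreover have "Q \<subseteq> gE G" using edgeQ(1) by blast
  ultimately have "is_cycle G Q" using cycle_rename[OF cyc _ inj] by blast
  thus False using ncyc by simp
qed

lemma x1_in: "x1 \<in> everts J Q"
proof -
  obtain e where "e \<in> Q" "x1 \<in> gends G e" using P1_ne unfolding P1_def by auto
  hence "x1 \<in> gends J e" using edgeQ(5) F_x1[of x1 x2] by simp
  thus ?thesis unfolding everts_def using \<open>e \<in> Q\<close> by blast
qed

lemma P_card: "card P1 = 1" "card P2 = 1"
proof -
  have "card {e\<in>Q. x1 \<in> gends J e} = 2" using cyc x1_in unfolding is_cycle_def by blast
  moreover have "{e\<in>Q. x1 \<in> gends J e} = P1 \<union> P2"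
    unfolding P1_def P2_def using edgeQ(5) F_x1[of x1 x2] by auto
  moreover have "P1 \<inter> P2 = {}" unfolding P1_def P2_def using not_both by blast
  moreover have "finite P1" "finite P2" unfolding P1_def P2_def using finQ by auto
  ultimately have "card P1 + card P2 = 2" by (simp add: card_Un_disjoint)
  moreover have "card P1 \<noteq> 0" "card P2 \<noteq> 0" using P1_ne P2_ne \<open>finite P1\<close> \<open>finite P2\<close> by auto
  ultimately show "card P1 = 1" "card P2 = 1" by auto
qed

definition "a1 = (THE a. P1 = {a})"
definition "a2 = (THE a. P2 = {a})"

lemma P1_eq: "P1 = {a1}"
proof -
  obtain a where "P1 = {a}" using P_card(1) card_1_singletonE by blast
  thus ?thesis unfolding a1_def by simp
qed

lemma P2_eq: "P2 = {a2}"
proof -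
  obtain a where "P2 = {a}" using P_card(2) card_1_singletonE by blast
  thus ?thesis unfolding a2_def by simp
qed

lemma deg_other:
  assumes "v \<in> everts G Q" "v \<noteq> x1" "v \<noteq> x2"
  shows "card {e\<in>Q. v \<in> gends G e} = 2"
proof -
  have eq: "{e\<in>Q. v \<in> gends J e} = {e\<in>Q. v \<in> gends G e}"
    using edgeQ(5) F_other[OF assms(2,3)] by auto
  have "v \<in> everts J Q" using assms eq unfolding everts_def by auto
  hence "card {e\<in>Q. v \<in> gends J e} = 2" using cyc unfolding is_cycle_def by blast
  thus ?thesis using eq by simp
qed

lemma closed_all:
  assumes S: "S \<subseteq> Q" and cl: "\<forall>e\<in>S. \<forall>e'\<in>Q - S. gends G e \<inter> gends G e' = {}"
    and a: "a1 \<in> S"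
  shows "S = Q"
proof -
  have finS: "finite S" using S finQ finite_subset by blast
  have a2S: "a2 \<in> S"
  proof (rule ccontr)
    assume na: "a2 \<notin> S"
    have fe: "\<forall>e\<in>S. finite (gends G e)" using S edgeQ(6) by blast
    have hs: "(\<Sum>v\<in>everts G S. card {e\<in>S. v \<in> gends G e}) = (\<Sum>e\<in>S. card (gends G e))"
      by (rule handshake[OF finS fe])
    also have "\<dots> = (\<Sum>e\<in>S. 2)" using S edgeQ(4) by (intro sum.cong) auto
    also have "\<dots> = 2 * card S" by simp
    finally have hs2: "(\<Sum>v\<in>everts G S. card {e\<in>S. v \<in> gends G e}) = 2 * card S" .
    have finE: "finite (everts G S)" using finS fe unfolding everts_def by auto
    have x1E: "x1 \<in> everts G S" using a P1_eq unfolding P1_def everts_def by auto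
    have c1: "{e\<in>S. x1 \<in> gends G e} = {a1}" using a S P1_eq unfolding P1_def by auto
    have c2: "card {e\<in>S. v \<in> gends G e} = 2" if v: "v \<in> everts G S - {x1}" for v
    proof -
      have "v \<noteq> x2"
      proof
        assume "v = x2"
        then obtain e where "e \<in> S" "x2 \<in> gends G e" using v unfolding everts_def by auto
        hence "e \<in> P2" using S unfolding P2_def by auto
        thus False using P2_eq na \<open>e \<in> S\<close> by auto
      qed
      obtain e0 where e0: "e0 \<in> S" "v \<in> gends G e0" using v unfolding everts_def by auto
      have "{e\<in>S. v \<in> gends G e} = {e\<in>Q. v \<in> gends G e}"
      proof -
        have "e \<in> S" if "e \<in> Q" "v \<in> gends G e" for e
          using cl e0 that by blast
        thus ?thesis using S by auto
      qed
      moreover have "v \<in> everts G Q" using v S unfolding everts_def by auto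
      ultimately show ?thesis using deg_other \<open>v \<noteq> x2\<close> v by simp
    qed
    have ins: "everts G S = insert x1 (everts G S - {x1})" using x1E by auto
    have "(\<Sum>v\<in>everts G S. card {e\<in>S. v \<in> gends G e})
        = (\<Sum>v\<in>insert x1 (everts G S - {x1}). card {e\<in>S. v \<in> gends G e})"
      using ins by (rule arg_cong)
    also have "\<dots> = card {e\<in>S. x1 \<in> gends G e} + (\<Sum>v\<in>everts G S - {x1}. card {e\<in>S. v \<in> gends G e})"
      by (rule sum.insert) (use finE in auto)
    also have "\<dots> = 1 + 2 * card (everts G S - {x1})"
    proof -
      have "(\<Sum>v\<in>everts G S - {x1}. card {e\<in>S. v \<in> gends G e}) = (\<Sum>v\<in>everts G S - {x1}. 2)"
        by (rule sum.cong) (simp_all add: c2)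
      moreover have "card {e\<in>S. x1 \<in> gends G e} = 1" by (simp add: c1)
      ultimately show ?thesis by simp
    qed
    finally show False using hs2 by presburger
  qed
  show ?thesis
  proof (rule ccontr)
    assume "S \<noteq> Q"
    hence "S \<noteq> {} \<and> S \<subset> Q" using S a by auto
    then obtain e e' where ee: "e \<in> S" "e' \<in> Q - S" "gends J e \<inter> gends J e' \<noteq> {}"
      using cycle_conn[OF cyc, of S] by blast
    have eQ: "e \<in> Q" "e' \<in> Q" using ee S by auto
    have dis: "gends G e \<inter> gends G e' = {}" using cl ee by blast
    obtain u u' where u: "u \<in> gends G e" "u' \<in> gends G e'" "F u = F u'"
      using ee(3) edgeQ(5)[OF eQ(1)] edgeQ(5)[OF eQ(2)] by auto
    have "u \<noteq> u'" using u dis by auto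
    hence "(u = x1 \<and> u' = x2) \<or> (u = x2 \<and> u' = x1)" using u(3) unfolding merge_map_def
      by (auto split: if_splits)
    thus False
    proof
      assume "u = x1 \<and> u' = x2"
      hence "e = a1" "e' = a2" using u eQ P1_eq P2_eq unfolding P1_def P2_def by auto
      thus False using ee a2S by auto
    next
      assume "u = x2 \<and> u' = x1"
      hence "e = a2" "e' = a1" using u eQ P1_eq P2_eq unfolding P1_def P2_def by auto
      thus False using ee a by auto
    qed
  qed
qed

end


theorem lemma5p1:
  fixes G :: "('v,'e) mgraph" and x0 x1 x2 :: 'v and Q Q' :: "'e set"
  assumes "wf_mgraph G"
    and "x0 \<in> gV G"
    and "degree G x0 = 2"
    and "neighbors G x0 = {x1, x2}"
    and "x1 \<noteq> x2"
    and "osculating_bicycle (bicontract G x0 x1 x2) Q Q'"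
    and "\<not> is_cycle G Q"
    and "\<not> is_cycle G Q'"
  shows "isolating_cycle G x0 (Q \<union> Q') \<and> even (card (Q \<union> Q'))"
proof -
  note ob = assms(6)[unfolded osculating_bicycle_def]
  interpret A: qpath G x0 x1 x2 Q using assms ob by unfold_locales auto
  interpret B: qpath G x0 x1 x2 Q' using assms ob by unfold_locales auto
  let ?J = "bicontract G x0 x1 x2"
  let ?C = "Q \<union> Q'"
  have int1: "everts ?J Q \<inter> everts ?J Q' = {x1}"
  proof -
    have "card (everts ?J Q \<inter> everts ?J Q') = 1" using ob by blast
    then obtain w where "everts ?J Q \<inter> everts ?J Q' = {w}" using card_1_singletonE by blast
    moreover have "x1 \<in> everts ?J Q \<inter> everts ?J Q'" using A.x1_in B.x1_in by blast
    ultimately show ?thesis by auto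
  qed
  have disj: "Q \<inter> Q' = {}"
  proof (rule ccontr)
    assume "Q \<inter> Q' \<noteq> {}"
    then obtain e where e: "e \<in> Q" "e \<in> Q'" by auto
    hence "gends ?J e \<subseteq> {x1}" using int1 unfolding everts_def by auto
    hence "card (gends ?J e) \<le> 1" using card_mono[of "{x1}" "gends ?J e"] by simp
    thus False using A.edgeQ(3,5)[OF e(1)] by simp
  qed
  have evint: "v \<in> {x1, x2}" if "v \<in> everts G Q" "v \<in> everts G Q'" for v
  proof (rule ccontr)
    assume nv: "v \<notin> {x1, x2}"
    have "v \<in> everts ?J Q" using that(1) A.edgeQ(5) F_other[of v x1 x2] nv unfolding everts_def by auto
    moreover have "v \<in> everts ?J Q'" using that(2) B.edgeQ(5) F_other[of v x1 x2] nv unfolding everts_def by auto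
    ultimately show False using int1 nv by auto
  qed
  have ab: "A.a1 \<noteq> B.a1" "A.a2 \<noteq> B.a2"
    using disj A.P1_eq B.P1_eq A.P2_eq B.P2_eq unfolding A.P1_def B.P1_def A.P2_def B.P2_def by auto
  have finC: "finite ?C" using A.finQ B.finQ by simp
  have CE: "?C \<subseteq> {e \<in> gE G. x0 \<notin> gends G e}" using A.edgeQ B.edgeQ by blast
  have Cne: "?C \<noteq> {}" using A.P1_eq unfolding A.P1_def by auto
  have Ccard: "\<forall>e\<in>?C. card (gends G e) = 2" using A.edgeQ B.edgeQ by blast
  have x1a: "{e\<in>?C. x1 \<in> gends G e} = {A.a1, B.a1}"
    using A.P1_eq B.P1_eq unfolding A.P1_def B.P1_def by auto
  have x2a: "{e\<in>?C. x2 \<in> gends G e} = {A.a2, B.a2}"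
    using A.P2_eq B.P2_eq unfolding A.P2_def B.P2_def by auto
  have deg: "card {e\<in>?C. v \<in> gends G e} = 2" if v: "v \<in> everts G ?C" for v
  proof (cases "v \<in> {x1, x2}")
    case True
    thus ?thesis using x1a x2a ab by auto
  next
    case False
    have "v \<in> everts G Q \<or> v \<in> everts G Q'" using v unfolding everts_def by auto
    thus ?thesis
    proof
      assume vQ: "v \<in> everts G Q"
      hence "v \<notin> everts G Q'" using evint False by blast
      hence "{e\<in>?C. v \<in> gends G e} = {e\<in>Q. v \<in> gends G e}" unfolding everts_def by auto
      thus ?thesis using A.deg_other[OF vQ] False by simp
    next
      assume vQ: "v \<in> everts G Q'"
      hence "v \<notin> everts G Q" using evint False by blast
      hence "{e\<in>?C. v \<in> gends G e} = {e\<in>Q'. v \<in> gends G e}" unfolding everts_def by auto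
      thus ?thesis using B.deg_other[OF vQ] False by simp
    qed
  qed
  have closed: "?C \<subseteq> S" if S: "S \<subseteq> ?C" and cl: "\<forall>e\<in>S. \<forall>e'\<in>?C - S. gends G e \<inter> gends G e' = {}"
    and a: "A.a1 \<in> S" for S
  proof -
    have x1a1: "x1 \<in> gends G A.a1" "x1 \<in> gends G B.a1"
      using A.P1_eq B.P1_eq unfolding A.P1_def B.P1_def by auto
    have b: "B.a1 \<in> S"
    proof (rule ccontr)
      assume "B.a1 \<notin> S"
      moreover have "B.a1 \<in> ?C" using B.P1_eq unfolding B.P1_def by auto
      ultimately show False using cl a x1a1 by blast
    qed
    have aQ: "A.a1 \<in> Q" "B.a1 \<in> Q'" using A.P1_eq B.P1_eq unfolding A.P1_def B.P1_def by auto
    have "S \<inter> Q = Q"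
      by (rule A.closed_all) (use S cl a aQ in auto)
    moreover have "S \<inter> Q' = Q'"
      by (rule B.closed_all) (use S cl b aQ in auto)
    ultimately show ?thesis by blast
  qed
  have conn: "\<exists>e\<in>D. \<exists>e'\<in>?C - D. gends G e \<inter> gends G e' \<noteq> {}" if D: "D \<noteq> {} \<and> D \<subset> ?C" for D
  proof (rule ccontr)
    assume "\<not> ?thesis"
    hence cl: "\<forall>e\<in>D. \<forall>e'\<in>?C - D. gends G e \<inter> gends G e' = {}" by blast
    have aC: "A.a1 \<in> ?C" using A.P1_eq unfolding A.P1_def by auto
    show False
    proof (cases "A.a1 \<in> D")
      case True
      thus False using closed[of D] D cl by blast
    next
      case False
      have "?C \<subseteq> ?C - D"
        by (rule closed) (use cl False aC in auto)
      thus False using D by blast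
    qed
  qed
  have cyc: "is_cycle (delete_vertex G x0) ?C"
  proof -
    have ev: "everts (delete_vertex G x0) ?C = everts G ?C" by (simp add: everts_def del_simps)
    show ?thesis unfolding is_cycle_def ev del_simps
    proof (intro conjI)
      show "?C \<subseteq> {e \<in> gE G. x0 \<notin> gends G e}" by (rule CE)
      show "?C \<noteq> {}" "finite ?C" by (rule Cne, rule finC)
      show "\<forall>e\<in>?C. card (gends G e) = 2" by (rule Ccard)
      show "\<forall>v\<in>everts G ?C. card {e\<in>?C. v \<in> gends G e} = 2" using deg by blast
      show "\<forall>D. D \<noteq> {} \<and> D \<subset> ?C \<longrightarrow> (\<exists>e\<in>D. \<exists>e'\<in>?C - D. gends G e \<inter> gends G e' \<noteq> {})"
        using conn by blast
    qed
  qed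
  have iso: "\<forall>e\<in>incident G x0. gends G e \<inter> everts G ?C \<noteq> {}"
  proof
    fix e assume e: "e \<in> incident G x0"
    hence eE: "e \<in> gE G" "x0 \<in> gends G e" unfolding incident_def by auto
    have "card (gends G e) = 2" using assms(1) eE unfolding wf_mgraph_def by blast
    then obtain y where y: "y \<in> gends G e" "y \<noteq> x0"
    proof -
      obtain a b where ab: "gends G e = {a, b}" "a \<noteq> b" using \<open>card (gends G e) = 2\<close> card_2_iff by metis
      show ?thesis using ab that by (cases "a = x0") auto
    qed
    have "y \<in> neighbors G x0" using y e unfolding neighbors_def by auto
    hence "y \<in> {x1, x2}" using assms(4) by simp
    moreover have "x1 \<in> everts G ?C" "x2 \<in> everts G ?C"
      using A.P1_eq A.P2_eq unfolding A.P1_def A.P2_def everts_def by auto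
    ultimately show "gends G e \<inter> everts G ?C \<noteq> {}" using y by auto
  qed
  have ev: "even (card ?C)"
    using card_Un_disjoint[OF A.finQ B.finQ disj] ob by auto
  show ?thesis using cyc iso ev assms(2) unfolding isolating_cycle_def by blast
qed

end
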